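(* Assume the standing hypotheses (H). For $(t,\mathbf x)\in\mathbf D$ and $\psi>0$ consider the problem of minimising $H^\psi_1(t,\mathbf x;\boldsymbol\zeta)$ subject to $\boldsymbol\zeta\in\mathbf Z^0_{\mathrm{lin}}(t,\mathbf x)$. (a) For each $(t,\mathbf x)\in\mathbf D$ and $\psi>0$, $\min_{\boldsymbol\zeta\in\mathbf Z^0_{\mathrm{lin}}(t,\mathbf x)}H^\psi_1(t,\mathbf x;\boldsymbol\zeta)=-\frac12\widetilde g(t,\mathbf x)\psi$, and the minimum is attained at $\boldsymbol\zeta^{\psi*}(t,\mathbf x)=\boldsymbol\zeta^0(\Sigma)+\psi\widetilde{\boldsymbol\zeta}(t,\mathbf x)$. In particular $\mathbf c(t,\mathbf x)^\top\widetilde{\boldsymbol\zeta}(t,\mathbf x)=0$ and $\mathbf e_4^\top\widetilde{\boldsymbol\zeta}(t,\mathbf x)\ge0$. (b) For each $(t,\mathbf x)\in\mathbf D$ and $\psi>0$, $(\lambda(t,\mathbf x),\mu(t,\mathbf x))$ is a Lagrange multiplier for this problem (independent of $\psi$), i.e. $-\frac12\widetilde g(t,\mathbf x)\psi=\inf_{\boldsymbol\zeta\in\mathbb R^4}L^\psi_1(t,\mathbf x;\boldsymbol\zeta,\lambda(t,\mathbf x),\mu(t,\mathbf x))$, where $L^\psi_1(t,\mathbf x;\boldsymbol\zeta,\lambda',\mu')=H^\psi_1(t,\mathbf x;\boldsymbol\zeta)+\lambda'\mathbf c(t,\mathbf x)^\top(\boldsymbol\zeta-\boldsymbol\zeta^0(\Sigma))-\mu'\mathbf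 e_4^\top(\boldsymbol\zeta-\boldsymbol\zeta^0(\Sigma))$. (c) There is $K_{\widetilde g}>0$ with $0\le\widetilde g\le K_{\widetilde g}$ on $\mathbf D$. (d) There is $K_{\boldsymbol\zeta}\ge1$ such that $\|\boldsymbol\zeta^\psi(t,\mathbf x)-\boldsymbol\zeta^0(\Sigma)\|\le K_{\boldsymbol\zeta}\psi$ for all $(t,\mathbf x)\in\mathbf D$ and $\psi>0$. (e) For every $(t,\mathbf x)\in\mathbf D$ and $\psi>0$, $H^\psi_1(t,\mathbf x;\boldsymbol\zeta^\psi(t,\mathbf x))=-\frac12\widetilde g(t,\mathbf x)\mathbf 1_{\{\Sigma\in(\underline\Sigma,\overline\Sigma)\}}\psi$. (f) There is $K_\lambda\in L^2_{\mathfrak P}$ such that for every $(t,\mathbf x)\in\mathbf D$, $|\lambda(t,\mathbf x)|\,\Big\|\begin{pmatrix}S^2\mathcal C_{SS}&S\mathcal C_{S\Sigma}\\S\mathcal C_{S\Sigma}&\mathcal C_{\Sigma\Sigma}\end{pmatrix}\Big\|_F\le K_\lambda(t,\mathbf x)$.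
   Context: Setting. Fix $T>0$, $S_0>0$, $\Sigma_0>0$, $A_0\in\mathbb R$. $\Omega$: continuous paths $\omega=(\omega^S,\omega^\Sigma,\omega^A):[0,T]\to\mathbb R^3$ with $\omega_0=(S_0,\Sigma_0,A_0)$ (uniform topology, Borel $\sigma$-algebra $\mathcal F$); $S,\Sigma,A$ coordinate processes, $\mathbb F$ their raw filtration, $M_t=\sup_{u\le t}S_u$, $\mathbf X_t=(S_t,A_t,M_t,\Sigma_t)$. $\mathbf G=\mathbb R_+\times\mathbb R\times\mathbb R_+$, $\mathbf D^0=(0,T)\times\mathbf G\times\mathbb R_+$ (points $(t,\mathbf x)$, $\mathbf x=(S,A,M,\Sigma)$); $0<\underline\Sigma<\Sigma_0<\overline\Sigma$, $\mathbf D=(0,T)\times\mathbf G\times[\underline\Sigma,\overline\Sigma]$. $\|\cdot\|$ Euclidean norm, $\|\cdot\|_F$ Frobenius norm, $\mathbf e_4$ fourth unit vector, $x^-=\max(-x,0)$. Call: $\mathcal C(t,S,\Sigma)$ with $\mathcal C_t+\frac12\Sigma^2S^2\mathcal C_{SS}=0$, $\mathcal C(T_{\mathsf C},S,\Sigma)=\mathsf C(S)$. $b^{\mathcal C}(t,\mathbf x;\boldsymbol\zeta)=\nu\mathcal C_\Sigma+\frac12S^2\mathcal C_{SS}(\sigma^2-\Sigma^2)+\sigma\eta S\mathcal C_{S\Sigma}+\frac12(\eta^2+\xi)\mathcal C_{\Sigma\Sigma}$ for $\boldsymbol\zeta=(\nu,\sigma,\eta,\xi)$. Models: $\mathfrak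 P^{00}$ = probability measures $P$ on $(\Omega,\mathcal F)$ with progressively measurable $\boldsymbol\zeta^P=(\nu^P,\sigma^P,\eta^P,\xi^P)$ such that $S$, $\Sigma-\int_0^\cdot\nu^P_tdt$ are continuous local $P$-martingales with $d\langle S\rangle_t=S_t^2(\sigma^P_t)^2dt$, $d\langle\Sigma\rangle_t=((\eta^P_t)^2+\xi^P_t)dt$, $d\langle S,\Sigma\rangle_t=S_t\sigma^P_t\eta^P_tdt$, $S,\Sigma>0$, $\xi^P\ge0$, $b^{\mathcal C}(t,\mathbf X_t;\boldsymbol\zeta^P_t)=0$ $dt\times P$-a.e.; for Borel $\alpha,\beta,\gamma,\delta:[0,T]\times\mathbb R^3\to\mathbb R$, $\mathfrak P^0$ = those $P$ with $dA_t=(\alpha+\frac12(\sigma^P_t)^2\beta)dt+\gamma dS_t+\delta dM_t$. $\boldsymbol\zeta^0(\Sigma)=(0,\Sigma,0,0)^\top$; reference model: $\boldsymbol\zeta^P_t=\boldsymbol\zeta^0(\Sigma_t)$ a.e. Non-traded option: $\mathcal V(\cdot,\Sigma)$ solves $\mathcal V_t+(\alpha+\frac12\beta\Sigma^2)\mathcal V_A+\frac12\Sigma^2S^2(\mathcal V_{SS}+2\gamma\mathcal V_{SA}+\gamma^2\mathcal V_{AA})=0$ on $(0,T)\times\mathbf G$, $\delta\mathcal V_A+\mathcal V_M=0$ on $\{S\ge M\}$, $\mathcal V(T,\cdot,\Sigma)=\mathsf V$. $\Delta=\mathcal V_S+\gamma\mathcal V_A$, $\Gamma=\mathcal V_{SS}+2\gamma\mathcal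 V_{SA}+\gamma^2\mathcal V_{AA}$, $\frac{\partial\Delta}{\partial\Sigma}:=\mathcal V_{S\Sigma}+\gamma\mathcal V_{A\Sigma}$. P&L: $V_t=\mathcal V(t,\mathbf X_t)$, $C_t=\mathcal C(t,S_t,\Sigma_t)$; strategies $\boldsymbol\upsilon=(\theta,\phi)$ real locally bounded progressive; $Y^{\boldsymbol\upsilon,P}_t=Y_0+V_0+\int_0^t\theta dS+\int_0^t\phi dC-V_t$. Preferences: $\Psi=\mathrm{diag}(\psi_\nu,\psi_\sigma,\psi_\eta,\psi_\xi)$, positive; a utility $U$, strategy set $\mathfrak Y$, model set $\mathfrak P\subset\mathfrak P^0$. Candidate control: $\mathbf c=(\mathcal C_\Sigma,\Sigma S^2\mathcal C_{SS},\Sigma S\mathcal C_{S\Sigma},\frac12\mathcal C_{\Sigma\Sigma})^\top$, $\mathbf v=(\mathcal V_\Sigma,\Sigma(\beta\mathcal V_A+S^2\Gamma),\Sigma S\frac{\partial\Delta}{\partial\Sigma},\frac12\mathcal V_{\Sigma\Sigma})^\top$; $\lambda=\frac{\mathbf c^\top\Psi\mathbf v}{\mathbf c^\top\Psi\mathbf c}$ if $\mathcal V_{\Sigma\Sigma}-\frac{\mathbf c^\top\Psi\mathbf v}{\mathbf c^\top\Psi\mathbf c}\mathcal C_{\Sigma\Sigma}\ge0$, else $\lambda=\frac{\mathbf c^\top\Psi\mathbf v-\frac14\mathcal C_{\Sigma\Sigma}\mathcal V_{\Sigma\Sigma}\psi_\xi}{\mathbf c^\top\Psi\mathbf c-\frac14\mathcal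 C_{\Sigma\Sigma}^2\psi_\xi}$; $\mu=\frac12(\mathcal V_{\Sigma\Sigma}-\lambda\mathcal C_{\Sigma\Sigma})^-$; $\widetilde{\boldsymbol\zeta}=\Psi(\mathbf v-\lambda\mathbf c+\mu\mathbf e_4)$; $\boldsymbol\zeta^\psi=\boldsymbol\zeta^0(\Sigma)+\widetilde{\boldsymbol\zeta}\mathbf 1_{\{\underline\Sigma<\Sigma<\overline\Sigma\}}\psi$; $\widetilde g=\mathbf v^\top\widetilde{\boldsymbol\zeta}$. Cash-equivalent PDE: for $\Sigma\in[\underline\Sigma,\overline\Sigma]$, $\widetilde w_t+(\alpha+\frac12\beta\Sigma^2)\widetilde w_A+\frac12\Sigma^2S^2(\widetilde w_{SS}+2\gamma\widetilde w_{SA}+\gamma^2\widetilde w_{AA})+\frac12\widetilde g(\cdot,\Sigma)=0$ on $(0,T)\times\mathbf G$, $\delta\widetilde w_A+\widetilde w_M=0$ on $\{S\ge M\}$, $\widetilde w(T,\cdot,\Sigma)=0$. $L^p_{\mathfrak P}$: Borel $K$ on $\mathbf D^0$ with $\sup_{P\in\mathfrak P}E^P[\int_0^T|K(t,\mathbf X_t)|^pdt]^{1/p}<\infty$. Candidate asymptotic model family: $(P^\psi)_{\psi\in(0,\psi_0)}\subset\mathfrak P$, $\psi_0\in(0,1)$, with $K_0\in L^4_{\mathfrak P}$ and $\|\boldsymbol\zeta^{P^\psi}_t-\boldsymbol\zeta^\psi(t,\mathbf X_t)\|\le K_0(t,\mathbf X_t)\psi^2$ $dt\times P^\psi$-a.e.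 Assumption (A): (a) $\exists K_{\mathfrak Y}$: $Y^{\boldsymbol\upsilon,P}>-K_{\mathfrak Y}$ $dt\times P$-a.e. for all $\boldsymbol\upsilon\in\mathfrak Y$, $P\in\mathfrak P$; (b) $\mathfrak P$ contains a candidate asymptotic model family and a reference model, and constants $\underline\nu<0<\overline\nu$, $0<\underline\sigma<\underline\Sigma$, $\overline\Sigma<\overline\sigma$, $\underline\eta<0<\overline\eta$, $\overline\xi>0$ bound $\nu^P,\sigma^P,\eta^P,\xi^P,\Sigma$ in $[\underline\nu,\overline\nu],[\underline\sigma,\overline\sigma],[\underline\eta,\overline\eta],[0,\overline\xi],[\underline\Sigma,\overline\Sigma]$ $dt\times P$-a.e. for all $P\in\mathfrak P$; (c) $T_{\mathsf C}\ge T$, $\mathcal C\in C^{1,2,2}((0,T_{\mathsf C})\times\mathbb R_+^2)\cap C([0,T_{\mathsf C}]\times\overline{\mathbb R}_+^2)$ solves the call PDE classically for $\Sigma\in[\underline\Sigma,\overline\Sigma]$, $\mathcal C_\Sigma\ne0$ and $|\mathcal C_{\Sigma\Sigma}|\le K_{\mathcal C}(|\mathcal C_\Sigma|+|S^2\mathcal C_{SS}|+|S\mathcal C_{S\Sigma}|)$ on $(0,T)\times\mathbb R_+\times[\underline\Sigma,\overline\Sigma]$ with $K_{\mathcal C}\in L^2_{\mathfrak P}$; (d) $\mathcal V\in C^{1,2,2,1,2}(\mathbf D^0)\cap C(\overline{\mathbf D^0})$ solves the $\mathcal V$-PDE classically for $\Sigma\in[\underline\Sigma,\overline\Sigma]$,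 $|\mathcal V_\Sigma|,|\beta\mathcal V_A+S^2\Gamma|,|S\frac{\partial\Delta}{\partial\Sigma}|,|\mathcal V_{\Sigma\Sigma}|\le K_{\mathcal V}$ on $\mathbf D$; (e) $\widetilde w\in C^{1,2,2,1,2}(\mathbf D^0)\cap C(\overline{\mathbf D^0})$ solves the cash-equivalent PDE classically for $\Sigma\in[\underline\Sigma,\overline\Sigma]$, $0\le\widetilde w\le K_{\widetilde w}$ on $\mathbf D$, and $\widetilde w_\Sigma,S(\widetilde w_S+\gamma\widetilde w_A),\beta\widetilde w_A+S^2(\widetilde w_{SS}+2\gamma\widetilde w_{SA}+\gamma^2\widetilde w_{AA}),S(\widetilde w_{S\Sigma}+\gamma\widetilde w_{A\Sigma}),\widetilde w_{\Sigma\Sigma}\in L^4_{\mathfrak P}$; (f) $U\in C^3(\mathbb R)$, $U'>0$, $U''<0$, $-U''/U'$ nonincreasing. Additional notation. $\mathbf Z^0=\mathbb R^3\times[0,\infty)$; for $(t,\mathbf x)\in\mathbf D$, $\mathbf Z^0_{\mathrm{lin}}(t,\mathbf x)=\{\boldsymbol\zeta\in\mathbf Z^0:\mathbf c(t,\mathbf x)^\top(\boldsymbol\zeta-\boldsymbol\zeta^0(\Sigma))=0\}$. $H^\psi_1(t,\mathbf x;\boldsymbol\zeta)=\frac1{2\psi}(\boldsymbol\zeta-\boldsymbol\zeta^0(\Sigma))^\top\Psi^{-1}(\boldsymbol\zeta-\boldsymbol\zeta^0(\Sigma))-\mathbf v(t,\mathbf x)^\top(\boldsymbol\zeta-\boldsymbol\zeta^0(\Sigma))$.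 Delta-vega hedge $\boldsymbol\upsilon^\star_t=(\Delta-\frac{\mathcal V_\Sigma}{\mathcal C_\Sigma}\mathcal C_S,\frac{\mathcal V_\Sigma}{\mathcal C_\Sigma})(t,\mathbf X_t)$. Standing hypotheses (H): Assumption (A) holds, $\boldsymbol\upsilon^\star\in\mathfrak Y$, and $(P^\psi)_{\psi\in(0,\psi_0)}\subset\mathfrak P$ is a candidate asymptotic model family. *)

theory Defs
  imports "HOL-Probability.Probability"
begin

text \<open>Continuous paths on [0,T] are represented as bounded continuous functions on the
  real line that are constant outside [0,T] (clamping); the sup-metric of the type
  \<open>real \<Rightarrow>\<^sub>C _\<close> restricted to this set is exactly the uniform metric on [0,T].\<close>

type_synonym path = "real \<Rightarrow>\<^sub>C (real \<times> real \<times> real)"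

definition Omega :: "real \<Rightarrow> real \<Rightarrow> real \<Rightarrow> real \<Rightarrow> path set" where
  "Omega T S0 Sig0 A0 =
     {\<omega>. apply_bcontfun \<omega> 0 = (S0, Sig0, A0) \<and>
          (\<forall>t. apply_bcontfun \<omega> t = apply_bcontfun \<omega> (min T (max 0 t)))}"

definition path_space :: "real \<Rightarrow> real \<Rightarrow> real \<Rightarrow> real \<Rightarrow> path measure" where
  "path_space T S0 Sig0 A0 = restrict_space borel (Omega T S0 Sig0 A0)"

definition S_proc :: "path \<Rightarrow> real \<Rightarrow> real" where
  "S_proc \<omega> t = fst (apply_bcontfun \<omega> t)"

definition Sig_proc :: "path \<Rightarrow> real \<Rightarrow> real" where
  "Sig_proc \<omega> t = fst (snd (apply_bcontfun \<omega> t))"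

definition A_proc :: "path \<Rightarrow> real \<Rightarrow> real" where
  "A_proc \<omega> t = snd (snd (apply_bcontfun \<omega> t))"

definition M_proc :: "path \<Rightarrow> real \<Rightarrow> real" where
  "M_proc \<omega> t = Sup (S_proc \<omega> ` {0..t})"

definition X_proc :: "path \<Rightarrow> real \<Rightarrow> real \<times> real \<times> real \<times> real" where
  "X_proc \<omega> t = (S_proc \<omega> t, A_proc \<omega> t, M_proc \<omega> t, Sig_proc \<omega> t)"

definition Lp_P :: "real \<Rightarrow> path measure set \<Rightarrow> real
                     \<Rightarrow> (real \<Rightarrow> real \<times> real \<times> real \<times> real \<Rightarrow> real) \<Rightarrow> bool" where
  "Lp_P T Pf p K \<longleftrightarrow>
     (\<lambda>(t, x). K t x) \<in> borel_measurable borel \<and>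
     (\<exists>B::real. \<forall>P\<in>Pf.
        (\<integral>\<^sup>+ \<omega>. (\<integral>\<^sup>+ t\<in>{0..T}. ennreal (\<bar>K t (X_proc \<omega> t)\<bar> powr p) \<partial>lborel) \<partial>P)
          \<le> ennreal B)"

definition in_D :: "real \<Rightarrow> real \<Rightarrow> real \<Rightarrow> real \<Rightarrow> real \<times> real \<times> real \<times> real \<Rightarrow> bool" where
  "in_D T Sig_lo Sig_hi t x \<longleftrightarrow>
     (case x of (S, A, M, Sig) \<Rightarrow>
        0 < t \<and> t < T \<and> 0 < S \<and> 0 < M \<and> Sig_lo \<le> Sig \<and> Sig \<le> Sig_hi)"

text \<open>Call price C(t,S,Sigma).\<close>
definition C_S where "C_S (C :: real \<Rightarrow> real \<Rightarrow> real \<Rightarrow> real) t S Sig = deriv (\<lambda>s. C t s Sig) S"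
definition C_SS where "C_SS C t S Sig = deriv (\<lambda>s. C_S C t s Sig) S"
definition C_Sig where "C_Sig (C :: real \<Rightarrow> real \<Rightarrow> real \<Rightarrow> real) t S Sig = deriv (\<lambda>y. C t S y) Sig"
definition C_SSig where "C_SSig C t S Sig = deriv (\<lambda>y. C_S C t S y) Sig"
definition C_SigSig where "C_SigSig C t S Sig = deriv (\<lambda>y. C_Sig C t S y) Sig"

text \<open>Non-traded option value V(t,S,A,M,Sigma).\<close>
type_synonym vfun = "real \<Rightarrow> real \<Rightarrow> real \<Rightarrow> real \<Rightarrow> real \<Rightarrow> real"

definition V_S :: "vfun \<Rightarrow> vfun" where "V_S V t S A M Sig = deriv (\<lambda>s. V t s A M Sig) S"
definition V_A :: "vfun \<Rightarrow> vfun" where "V_A V t S A M Sig = deriv (\<lambda>a. V t S a M Sig) A"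
definition V_Sig :: "vfun \<Rightarrow> vfun" where "V_Sig V t S A M Sig = deriv (\<lambda>y. V t S A M y) Sig"
definition V_SS :: "vfun \<Rightarrow> vfun" where "V_SS V t S A M Sig = deriv (\<lambda>s. V_S V t s A M Sig) S"
definition V_SA :: "vfun \<Rightarrow> vfun" where "V_SA V t S A M Sig = deriv (\<lambda>a. V_S V t S a M Sig) A"
definition V_AA :: "vfun \<Rightarrow> vfun" where "V_AA V t S A M Sig = deriv (\<lambda>a. V_A V t S a M Sig) A"
definition V_SSig :: "vfun \<Rightarrow> vfun" where "V_SSig V t S A M Sig = deriv (\<lambda>y. V_S V t S A M y) Sig"
definition V_ASig :: "vfun \<Rightarrow> vfun" where "V_ASig V t S A M Sig = deriv (\<lambda>y. V_A V t S A M y) Sig"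
definition V_SigSig :: "vfun \<Rightarrow> vfun" where "V_SigSig V t S A M Sig = deriv (\<lambda>y. V_Sig V t S A M y) Sig"

text \<open>Coefficient functions alpha, beta, gamma, delta : [0,T] \<times> R^3 \<rightarrow> R, arguments (t,S,A,M).\<close>
type_synonym cfun = "real \<Rightarrow> real \<Rightarrow> real \<Rightarrow> real \<Rightarrow> real"

definition Gamma_V :: "vfun \<Rightarrow> cfun \<Rightarrow> vfun" where
  "Gamma_V V gam t S A M Sig =
     V_SS V t S A M Sig + 2 * gam t S A M * V_SA V t S A M Sig
     + (gam t S A M)\<^sup>2 * V_AA V t S A M Sig"

definition dDelta_dSig :: "vfun \<Rightarrow> cfun \<Rightarrow> vfun" where
  "dDelta_dSig V gam t S A M Sig = V_SSig V t S A M Sig + gam t S A M * V_ASig V t S A M Sig"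

type_synonym vec4 = "real ^ 4"

definition vec4 :: "real \<Rightarrow> real \<Rightarrow> real \<Rightarrow> real \<Rightarrow> vec4" where
  "vec4 a b c d = vector [a, b, c, d]"

text \<open>Multiplication by Psi = diag(psi_nu, psi_sigma, psi_eta, psi_xi) and by its inverse.\<close>
definition Psi_mul :: "vec4 \<Rightarrow> vec4 \<Rightarrow> vec4" where
  "Psi_mul psi z = (\<chi> i. psi $ i * z $ i)"
definition Psi_inv_mul :: "vec4 \<Rightarrow> vec4 \<Rightarrow> vec4" where
  "Psi_inv_mul psi z = (\<chi> i. z $ i / psi $ i)"

definition e4 :: vec4 where "e4 = axis 4 1"

definition zeta0 :: "real \<Rightarrow> vec4" where "zeta0 Sig = vec4 0 Sig 0 0"

definition cvec :: "(real \<Rightarrow> real \<Rightarrow> real \<Rightarrow> real) \<Rightarrow> real \<Rightarrow> real \<times> real \<times> real \<times> real \<Rightarrow> vec4" where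
  "cvec C t x = (case x of (S, A, M, Sig) \<Rightarrow>
     vec4 (C_Sig C t S Sig) (Sig * S\<^sup>2 * C_SS C t S Sig) (Sig * S * C_SSig C t S Sig)
          (C_SigSig C t S Sig / 2))"

definition vvec :: "vfun \<Rightarrow> cfun \<Rightarrow> cfun \<Rightarrow> real \<Rightarrow> real \<times> real \<times> real \<times> real \<Rightarrow> vec4" where
  "vvec V bet gam t x = (case x of (S, A, M, Sig) \<Rightarrow>
     vec4 (V_Sig V t S A M Sig)
          (Sig * (bet t S A M * V_A V t S A M Sig + S\<^sup>2 * Gamma_V V gam t S A M Sig))
          (Sig * S * dDelta_dSig V gam t S A M Sig)
          (V_SigSig V t S A M Sig / 2))"

definition lam :: "vec4 \<Rightarrow> (real \<Rightarrow> real \<Rightarrow> real \<Rightarrow> real) \<Rightarrow> vfun \<Rightarrow> cfun \<Rightarrow> cfun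
                   \<Rightarrow> real \<Rightarrow> real \<times> real \<times> real \<times> real \<Rightarrow> real" where
  "lam psi C V bet gam t x =
     (let c = cvec C t x; v = vvec V bet gam t x;
          CSS = 2 * c $ 4; VSS = 2 * v $ 4;
          l1 = (c \<bullet> Psi_mul psi v) / (c \<bullet> Psi_mul psi c)
      in if VSS - l1 * CSS \<ge> 0 then l1
         else (c \<bullet> Psi_mul psi v - CSS * VSS * psi $ 4 / 4)
              / (c \<bullet> Psi_mul psi c - CSS\<^sup>2 * psi $ 4 / 4))"

definition mu :: "vec4 \<Rightarrow> (real \<Rightarrow> real \<Rightarrow> real \<Rightarrow> real) \<Rightarrow> vfun \<Rightarrow> cfun \<Rightarrow> cfun
                   \<Rightarrow> real \<Rightarrow> real \<times> real \<times> real \<times> real \<Rightarrow> real" where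
  "mu psi C V bet gam t x =
     (let c = cvec C t x; v = vvec V bet gam t x
      in max (- (2 * v $ 4 - lam psi C V bet gam t x * (2 * c $ 4))) 0 / 2)"

definition zeta_tilde :: "vec4 \<Rightarrow> (real \<Rightarrow> real \<Rightarrow> real \<Rightarrow> real) \<Rightarrow> vfun \<Rightarrow> cfun \<Rightarrow> cfun
                   \<Rightarrow> real \<Rightarrow> real \<times> real \<times> real \<times> real \<Rightarrow> vec4" where
  "zeta_tilde psi C V bet gam t x =
     Psi_mul psi (vvec V bet gam t x - lam psi C V bet gam t x *\<^sub>R cvec C t x
                  + mu psi C V bet gam t x *\<^sub>R e4)"

definition g_tilde :: "vec4 \<Rightarrow> (real \<Rightarrow> real \<Rightarrow> real \<Rightarrow> real) \<Rightarrow> vfun \<Rightarrow> cfun \<Rightarrow> cfun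
                   \<Rightarrow> real \<Rightarrow> real \<times> real \<times> real \<times> real \<Rightarrow> real" where
  "g_tilde psi C V bet gam t x = vvec V bet gam t x \<bullet> zeta_tilde psi C V bet gam t x"

definition zeta_psi :: "real \<Rightarrow> real \<Rightarrow> vec4 \<Rightarrow> (real \<Rightarrow> real \<Rightarrow> real \<Rightarrow> real) \<Rightarrow> vfun \<Rightarrow> cfun \<Rightarrow> cfun
                   \<Rightarrow> real \<Rightarrow> real \<Rightarrow> real \<times> real \<times> real \<times> real \<Rightarrow> vec4" where
  "zeta_psi Sig_lo Sig_hi psi C V bet gam \<psi> t x = (case x of (S, A, M, Sig) \<Rightarrow>
     zeta0 Sig + (indicator {Sig_lo<..<Sig_hi} Sig * \<psi>) *\<^sub>R zeta_tilde psi C V bet gam t x)"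

definition Z0 :: "vec4 set" where "Z0 = {z. z $ 4 \<ge> 0}"

definition Z0_lin :: "(real \<Rightarrow> real \<Rightarrow> real \<Rightarrow> real) \<Rightarrow> real \<Rightarrow> real \<times> real \<times> real \<times> real \<Rightarrow> vec4 set" where
  "Z0_lin C t x = (case x of (S, A, M, Sig) \<Rightarrow>
     {z \<in> Z0. cvec C t x \<bullet> (z - zeta0 Sig) = 0})"

definition H1 :: "vec4 \<Rightarrow> vfun \<Rightarrow> cfun \<Rightarrow> cfun \<Rightarrow> real \<Rightarrow> real \<Rightarrow> real \<times> real \<times> real \<times> real \<Rightarrow> vec4 \<Rightarrow> real" where
  "H1 psi V bet gam \<psi> t x z = (case x of (S, A, M, Sig) \<Rightarrow>
     (1 / (2 * \<psi>)) * ((z - zeta0 Sig) \<bullet> Psi_inv_mul psi (z - zeta0 Sig))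
     - vvec V bet gam t x \<bullet> (z - zeta0 Sig))"

definition L1 :: "vec4 \<Rightarrow> (real \<Rightarrow> real \<Rightarrow> real \<Rightarrow> real) \<Rightarrow> vfun \<Rightarrow> cfun \<Rightarrow> cfun
                  \<Rightarrow> real \<Rightarrow> real \<Rightarrow> real \<times> real \<times> real \<times> real \<Rightarrow> vec4 \<Rightarrow> real \<Rightarrow> real \<Rightarrow> real" where
  "L1 psi C V bet gam \<psi> t x z l m = (case x of (S, A, M, Sig) \<Rightarrow>
     H1 psi V bet gam \<psi> t x z + l * (cvec C t x \<bullet> (z - zeta0 Sig)) - m * (e4 \<bullet> (z - zeta0 Sig)))"

definition frobenius_norm :: "real ^ 'n ^ 'm \<Rightarrow> real" where
  "frobenius_norm A = sqrt (\<Sum>i\<in>UNIV. \<Sum>j\<in>UNIV. (A $ i $ j)\<^sup>2)"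

definition mat2 :: "real \<Rightarrow> real \<Rightarrow> real \<Rightarrow> real \<Rightarrow> real ^ 2 ^ 2" where
  "mat2 a b c d = vector [vector [a, b], vector [c, d]]"

end

theory Submission
  imports Defs
begin


lemma inner4: "(x::vec4) \<bullet> y = x$1*y$1 + x$2*y$2 + x$3*y$3 + x$4*y$4"
  by (simp add: inner_vec_def sum_4)
lemma e4_nth: "e4 $ i = (if i = 4 then 1 else 0)" by (simp add: e4_def axis_def)
lemma vec4_nth[simp]: "vec4 a b c d $ 1 = a" "vec4 a b c d $ 2 = b" "vec4 a b c d $ 3 = c" "vec4 a b c d $ 4 = d"
  by (simp_all add: vec4_def vector_def)

definition lamc :: "vec4 \<Rightarrow> vec4 \<Rightarrow> vec4 \<Rightarrow> real" where
 "lamc psi c v = (let CSS = 2 * c $ 4; VSS = 2 * v $ 4;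
          la = (c \<bullet> Psi_mul psi v) / (c \<bullet> Psi_mul psi c)
      in if VSS - la * CSS \<ge> 0 then la
         else (c \<bullet> Psi_mul psi v - CSS * VSS * psi $ 4 / 4)
              / (c \<bullet> Psi_mul psi c - CSS\<^sup>2 * psi $ 4 / 4))"
definition muc :: "vec4 \<Rightarrow> vec4 \<Rightarrow> vec4 \<Rightarrow> real" where
 "muc psi c v = max (- (2 * v $ 4 - lamc psi c v * (2 * c $ 4))) 0 / 2"
definition wc :: "vec4 \<Rightarrow> vec4 \<Rightarrow> vec4 \<Rightarrow> vec4" where
 "wc psi c v = v - lamc psi c v *\<^sub>R c + muc psi c v *\<^sub>R e4"
definition zc :: "vec4 \<Rightarrow> vec4 \<Rightarrow> vec4 \<Rightarrow> vec4" where
 "zc psi c v = Psi_mul psi (wc psi c v)"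

lemma lam_eq: "lam psi C V bet gam t x = lamc psi (cvec C t x) (vvec V bet gam t x)"
  unfolding lam_def lamc_def Let_def by simp
lemma mu_eq: "mu psi C V bet gam t x = muc psi (cvec C t x) (vvec V bet gam t x)"
  unfolding mu_def muc_def Let_def lam_eq by simp
lemma zt_eq: "zeta_tilde psi C V bet gam t x = zc psi (cvec C t x) (vvec V bet gam t x)"
  unfolding zeta_tilde_def zc_def wc_def lam_eq mu_eq by simp
lemma g_eq: "g_tilde psi C V bet gam t x = vvec V bet gam t x \<bullet> zc psi (cvec C t x) (vvec V bet gam t x)"
  unfolding g_tilde_def zt_eq by simp

lemma kkt_real:
 fixes ca cb cc cd ud pa pb pc pd A B la lam mu :: real
 assumes p: "0<pa" "0<pb" "0<pc" "0<pd" and ca: "ca \<noteq> 0"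
  and B: "B = ca*(pa*ca)+cb*(pb*cb)+cc*(pc*cc)+cd*(pd*cd)"
  and la: "la = A/B"
  and lam: "lam = (if 2*ud - la*(2*cd) \<ge> 0 then la else (A - 2*cd*(2*ud)*pd/4)/(B - (2*cd)\<^sup>2*pd/4))"
  and mu: "mu = max (-(2*ud - lam*(2*cd))) 0 / 2"
 shows "A - lam*B + mu*(cd*pd) = 0" "ud - lam*cd + mu \<ge> 0" "mu * (ud - lam*cd+mu) = 0" "mu \<ge> 0"
proof -
  have e: "ca*(pa*ca) = pa*ca\<^sup>2" by (simp add: power2_eq_square)
  have "pa*ca\<^sup>2 > 0" using p ca by simp
  hence "ca*(pa*ca) > 0" unfolding e .
  moreover have "cb*(pb*cb) \<ge> 0" "cc*(pc*cc) \<ge> 0" "cd*(pd*cd) \<ge> 0" using p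
    by (metis mult.left_commute mult_nonneg_nonneg less_imp_le zero_le_square)+
  ultimately have B3: "B - cd*(pd*cd) > 0" and Bp: "B > 0" using B by linarith+
  have "A - lam*B + mu*(cd*pd) = 0 \<and> ud - lam*cd + mu \<ge> 0 \<and> mu * (ud - lam*cd+mu) = 0 \<and> mu \<ge> 0"
  proof (cases "2*ud - la*(2*cd) \<ge> 0")
    case True
    hence "lam = la" using lam by simp
    moreover have "mu = 0" using mu True \<open>lam = la\<close> by simp
    moreover have "la*cd \<le> ud" using True by simp
    ultimately show ?thesis using la Bp by simp
  next
    case False
    hence lam2: "lam = (A - cd*ud*pd)/(B - cd*(pd*cd))" using lam by (simp add: power2_eq_square algebra_simps)
    have "ud < la*cd" using False by simp
    hence "ud * B < A*cd" using la Bp by (simp add: field_simps)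
    have e: "lam*cd - ud = (A*cd - ud*B)/(B - cd*(pd*cd))" using B3 unfolding lam2
      by (simp add: field_simps)
    have "lam*cd - ud > 0" unfolding e using B3 \<open>ud * B < A*cd\<close> by simp
    hence muv: "mu = lam*cd - ud" using mu by (simp add: algebra_simps)
    have "lam * (B - cd*(pd*cd)) = A - cd*ud*pd" using B3 unfolding lam2 by simp
    thus ?thesis unfolding muv using \<open>lam*cd - ud > 0\<close> by (simp add: algebra_simps)
  qed
  thus "A - lam*B + mu*(cd*pd) = 0" "ud - lam*cd + mu \<ge> 0" "mu * (ud - lam*cd+mu) = 0" "mu \<ge> 0" by auto
qed

locale pcl =
  fixes psi c v :: vec4
  assumes ppos: "\<And>i. 0 < psi $ i" and ca: "c $ 1 \<noteq> 0"
begin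

lemma kkt: "c \<bullet> zc psi c v = 0" "zc psi c v $ 4 \<ge> 0" "muc psi c v * zc psi c v $ 4 = 0" "muc psi c v \<ge> 0"
proof -
  note k = kkt_real[where ca="c$1" and cb="c$2" and cc="c$3" and cd="c$4" and B="c \<bullet> Psi_mul psi c"
     and A="c \<bullet> Psi_mul psi v" and lam="lamc psi c v" and ud="v$4" and mu="muc psi c v"
     and pa="psi$1" and pb="psi$2" and pc="psi$3" and pd="psi$4" and la="(c \<bullet> Psi_mul psi v)/(c \<bullet> Psi_mul psi c)",
     OF ppos[of 1] ppos[of 2] ppos[of 3] ppos[of 4] ca _ refl]
  have B: "c \<bullet> Psi_mul psi c = c$1*(psi$1*c$1)+c$2*(psi$2*c$2)+c$3*(psi$3*c$3)+c$4*(psi$4*c$4)"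
    by (simp add: inner4 Psi_mul_def)
  have l: "lamc psi c v = (if 2* v$4 - (c \<bullet> Psi_mul psi v)/(c \<bullet> Psi_mul psi c)*(2*c$4) \<ge> 0 then (c \<bullet> Psi_mul psi v)/(c \<bullet> Psi_mul psi c) else ((c \<bullet> Psi_mul psi v) - 2*c$4*(2* v$4)*psi$4/4)/((c \<bullet> Psi_mul psi c) - (2*c$4)\<^sup>2*psi$4/4))"
    unfolding lamc_def Let_def by simp
  note k = k[OF B l muc_def]
  have cz: "c \<bullet> zc psi c v = c \<bullet> Psi_mul psi v - lamc psi c v * (c \<bullet> Psi_mul psi c) + muc psi c v * (c$4 * psi$4)"
    by (simp add: zc_def wc_def inner4 Psi_mul_def e4_nth algebra_simps)
  have z4: "zc psi c v $ 4 = psi$4 * (v$4 - lamc psi c v * c$4 + muc psi c v)"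
    by (simp add: zc_def wc_def Psi_mul_def e4_nth)
  show "c \<bullet> zc psi c v = 0" using k(1) cz by simp
  show "zc psi c v $ 4 \<ge> 0" using k(2) z4 ppos[of 4] by simp
  have "muc psi c v * zc psi c v $ 4 = psi$4 * (muc psi c v * (v$4 - lamc psi c v * c$4 + muc psi c v))"
    unfolding z4 by (simp add: algebra_simps)
  thus "muc psi c v * zc psi c v $ 4 = 0" using k(3) by simp
  show "muc psi c v \<ge> 0" using k(4) .
qed

lemma inv_cancel: "Psi_inv_mul psi (Psi_mul psi w) = w"
proof -
  have "\<And>i. psi$i \<noteq> 0" using ppos by (metis less_irrefl)
  thus ?thesis by (simp add: vec_eq_iff Psi_inv_mul_def Psi_mul_def)
qed

lemma e4_inner: "e4 \<bullet> z = z $ 4" "z \<bullet> e4 = z $ 4"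
  by (simp_all add: inner4 e4_nth)

lemma wz: "wc psi c v \<bullet> zc psi c v = v \<bullet> zc psi c v"
  using kkt by (simp add: wc_def inner_diff_left inner_add_left e4_inner)

lemma zz: "zc psi c v \<bullet> Psi_inv_mul psi (zc psi c v) = v \<bullet> zc psi c v"
  unfolding zc_def inv_cancel using wz by (simp add: zc_def inner_commute)

lemma quad_term: fixes d w p r :: real assumes "0 < r" "0 < p"
  shows "1/(2 * r) * (d*(d/p)) - w*d \<ge> -(r / 2) * (w*(p*w))"
proof -
  have "1/(2 * r) * (d*(d/p)) - w*d + (r / 2) * (w*(p*w)) = (d - r*p*w)\<^sup>2 / (2*r*p)"
    using assms by (simp add: field_simps power2_eq_square)
  also have "... \<ge> 0" using assms by simp
  finally show ?thesis by linarith
qed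

lemma quad: assumes "0 < r"
  shows "1/(2 * r) * (d \<bullet> Psi_inv_mul psi d) - w \<bullet> d \<ge> -(r / 2) * (w \<bullet> Psi_mul psi w)"
proof -
  note q = quad_term[where d="d$1" and w="w$1", OF assms ppos[of 1]] quad_term[where d="d$2" and w="w$2", OF assms ppos[of 2]]
     quad_term[where d="d$3" and w="w$3", OF assms ppos[of 3]] quad_term[where d="d$4" and w="w$4", OF assms ppos[of 4]]
  show ?thesis using q by (simp add: inner4 Psi_inv_mul_def Psi_mul_def algebra_simps)
qed

lemma quad_eq: assumes "0 < r"
  shows "1/(2 * r) * ((r *\<^sub>R Psi_mul psi w) \<bullet> Psi_inv_mul psi (r *\<^sub>R Psi_mul psi w)) - w \<bullet> (r *\<^sub>R Psi_mul psi w)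
     = -(r / 2) * (w \<bullet> Psi_mul psi w)"
proof -
  have "\<And>i. psi$i \<noteq> 0" using ppos by (metis less_irrefl)
  hence "Psi_inv_mul psi (r *\<^sub>R Psi_mul psi w) = r *\<^sub>R w"
    by (simp add: vec_eq_iff Psi_inv_mul_def Psi_mul_def)
  thus ?thesis using assms by (simp add: inner_commute power2_eq_square field_simps)
qed

definition "gg = v \<bullet> zc psi c v"

lemma g_nonneg: "0 \<le> gg"
proof -
  have "gg = zc psi c v \<bullet> Psi_inv_mul psi (zc psi c v)" using zz gg_def by simp
  also have "... \<ge> 0"
  proof -
    have "\<And>i. 0 \<le> zc psi c v $ i * (zc psi c v $ i / psi $ i)"
      using ppos by (simp add: less_imp_le)
    thus ?thesis by (simp add: inner_vec_def Psi_inv_mul_def sum_nonneg)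
  qed
  finally show ?thesis .
qed

lemma g_le: "gg \<le> v \<bullet> Psi_mul psi v"
proof -
  have "1/(2*1) * (zc psi c v \<bullet> Psi_inv_mul psi (zc psi c v)) - v \<bullet> zc psi c v \<ge> -(1/2) * (v \<bullet> Psi_mul psi v)"
    using quad[where r=1 and d="zc psi c v" and w=v] by simp
  thus ?thesis using zz gg_def by simp
qed

lemma wPw: "wc psi c v \<bullet> Psi_mul psi (wc psi c v) = gg"
  using wz gg_def by (simp add: zc_def)

lemma lagr_eq: "d \<bullet> Psi_inv_mul psi d / (2 * r) - v \<bullet> d + lamc psi c v * (c \<bullet> d) - muc psi c v * (e4 \<bullet> d)
   = 1/(2 * r) * (d \<bullet> Psi_inv_mul psi d) - wc psi c v \<bullet> d"
  by (simp add: wc_def inner_diff_left inner_add_left)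

lemma lagr_lower: assumes "0 < r"
  shows "-(1/2)*gg*r \<le> d \<bullet> Psi_inv_mul psi d / (2 * r) - v \<bullet> d + lamc psi c v * (c \<bullet> d) - muc psi c v * (e4 \<bullet> d)"
  unfolding lagr_eq using quad[where d=d and w="wc psi c v", OF assms] wPw by (simp add: algebra_simps)

lemma at_star: assumes "0 < r"
  shows "(r *\<^sub>R zc psi c v) \<bullet> Psi_inv_mul psi (r *\<^sub>R zc psi c v) / (2 * r) - v \<bullet> (r *\<^sub>R zc psi c v) = -(1/2)*gg*r"
  and "c \<bullet> (r *\<^sub>R zc psi c v) = 0" "e4 \<bullet> (r *\<^sub>R zc psi c v) \<ge> 0"
proof -
  have "1/(2 * r) * ((r *\<^sub>R zc psi c v) \<bullet> Psi_inv_mul psi (r *\<^sub>R zc psi c v)) - wc psi c v \<bullet> (r *\<^sub>R zc psi c v) = -(1/2)*gg*r"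
    using quad_eq[OF assms, of "wc psi c v"] wPw by (simp add: zc_def)
  moreover have "wc psi c v \<bullet> (r *\<^sub>R zc psi c v) = v \<bullet> (r *\<^sub>R zc psi c v)" using wz by simp
  moreover have "(r *\<^sub>R zc psi c v) \<bullet> Psi_inv_mul psi (r *\<^sub>R zc psi c v) / (2 * r) = 1/(2 * r) * ((r *\<^sub>R zc psi c v) \<bullet> Psi_inv_mul psi (r *\<^sub>R zc psi c v))"
    by simp
  ultimately show "(r *\<^sub>R zc psi c v) \<bullet> Psi_inv_mul psi (r *\<^sub>R zc psi c v) / (2 * r) - v \<bullet> (r *\<^sub>R zc psi c v) = -(1/2)*gg*r"
    by linarith
  show "c \<bullet> (r *\<^sub>R zc psi c v) = 0" using kkt by simp
  show "e4 \<bullet> (r *\<^sub>R zc psi c v) \<ge> 0" using kkt assms by (simp add: e4_inner)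
qed

lemma feas_lower: assumes "0 < r" "c \<bullet> d = 0" "d $ 4 \<ge> 0"
  shows "-(1/2)*gg*r \<le> d \<bullet> Psi_inv_mul psi d / (2 * r) - v \<bullet> d"
proof -
  have "muc psi c v * (e4 \<bullet> d) \<ge> 0" using kkt assms by (simp add: e4_inner)
  thus ?thesis using lagr_lower[OF assms(1), of d] assms(2) by simp
qed

end


lemma nn_int_add_simple_le:
  assumes u: "simple_function M u"
  shows "(\<integral>\<^sup>+x. u x + g x \<partial>M) \<le> integral\<^sup>N M u + integral\<^sup>N M g"
  unfolding nn_integral_def[of M "\<lambda>x. u x + g x"]
proof (rule SUP_least)
  fix h assume "h \<in> {h. simple_function M h \<and> h \<le> (\<lambda>x. u x + g x)}"
  hence h: "simple_function M h" "\<And>x. h x \<le> u x + g x" by (auto simp: le_fun_def)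
  define h' where "h' = (\<lambda>x. if u x = top then 0 else h x - u x)"
  have sh': "simple_function M h'" unfolding h'_def
    using simple_function_compose2[OF h(1) u, of "\<lambda>a b. if b = top then 0 else a - b"] by simp
  have hle: "h x \<le> u x + h' x" for x
  proof (cases "u x = top")
    case True thus ?thesis by simp
  next
    case False
    show ?thesis
    proof (cases "u x \<le> h x")
      case True thus ?thesis using False by (simp add: h'_def add_diff_inverse_ennreal)
    next
      case F2: False
      hence "h x \<le> u x" by simp
      also have "... \<le> u x + h' x" by simp
      finally show ?thesis .
    qed
  qed
  have h'g: "h' x \<le> g x" for x
    using h(2)[of x] by (auto simp: h'_def ennreal_minus_le_iff)
  have "integral\<^sup>S M h \<le> integral\<^sup>S M (\<lambda>x. u x + h' x)"
    by (rule simple_integral_mono[OF h(1)]) (use u sh' hle in auto)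
  also have "... = integral\<^sup>S M u + integral\<^sup>S M h'" using u sh' by simp
  also have "... = integral\<^sup>N M u + integral\<^sup>N M h'"
    using u sh' by (simp add: nn_integral_eq_simple_integral)
  also have "... \<le> integral\<^sup>N M u + integral\<^sup>N M g"
    by (intro add_left_mono nn_integral_mono h'g)
  finally show "integral\<^sup>S M h \<le> integral\<^sup>N M u + integral\<^sup>N M g" .
qed

lemma nn_int_cmult_le:
  fixes c :: ennreal assumes "c \<noteq> top"
  shows "(\<integral>\<^sup>+x. c * g x \<partial>M) \<le> c * integral\<^sup>N M g"
proof (cases "c = 0")
  case True thus ?thesis by simp
next
  case c0: False
  show ?thesis
  unfolding nn_integral_def[of M "\<lambda>x. c * g x"]
  proof (rule SUP_least)
    fix h assume "h \<in> {h. simple_function M h \<and> h \<le> (\<lambda>x. c * g x)}"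
    hence h: "simple_function M h" "\<And>x. h x \<le> c * g x" by (auto simp: le_fun_def)
    define h' where "h' = (\<lambda>x. h x / c)"
    have sh': "simple_function M h'" unfolding h'_def
      using simple_function_compose1[OF h(1), of "\<lambda>a. a / c"] by simp
    have eq: "h x = c * h' x" for x
    proof -
      have "c * h x / c = h x * c / c" by (simp add: mult.commute)
      also have "... = h x" using c0 assms by (rule mult_divide_eq_ennreal)
      finally show ?thesis unfolding h'_def ennreal_times_divide by simp
    qed
    have h'g: "h' x \<le> g x" for x
    proof -
      have "h' x \<le> (c * g x) / c" unfolding h'_def by (rule divide_right_mono_ennreal[OF h(2)])
      also have "... = g x * c / c" by (simp add: mult.commute)
      also have "... = g x" using c0 assms by (rule mult_divide_eq_ennreal)
      finally show ?thesis .
    qed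
    have "integral\<^sup>S M h = integral\<^sup>S M (\<lambda>x. c * h' x)" using eq by presburger
    also have "... = c * integral\<^sup>S M h'" using sh' by simp
    also have "... = c * integral\<^sup>N M h'" using sh' by (simp add: nn_integral_eq_simple_integral)
    also have "... \<le> c * integral\<^sup>N M g"
      by (intro mult_left_mono nn_integral_mono h'g) simp
    finally show "integral\<^sup>S M h \<le> c * integral\<^sup>N M g" .
  qed
qed
lemma Lp_affine:
  assumes L: "Lp_P T Pf 2 K" and probs: "\<forall>P\<in>Pf. prob_space P" and T: "0 \<le> T"
  shows "Lp_P T Pf 2 (\<lambda>t x. k * (2 + \<bar>K t x\<bar>))"
proof -
  from L have m: "(\<lambda>(t, x). K t x) \<in> borel_measurable borel" and
    "\<exists>B::real. \<forall>P\<in>Pf. (\<integral>\<^sup>+ \<omega>. (\<integral>\<^sup>+ t\<in>{0..T}. ennreal (\<bar>K t (X_proc \<omega> t)\<bar> powr 2) \<partial>lborel) \<partial>P) \<le> ennreal B"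
    unfolding Lp_P_def by auto
  then obtain B where B: "\<And>P. P\<in>Pf \<Longrightarrow> (\<integral>\<^sup>+ \<omega>. (\<integral>\<^sup>+ t\<in>{0..T}. ennreal (\<bar>K t (X_proc \<omega> t)\<bar> powr 2) \<partial>lborel) \<partial>P) \<le> ennreal B"
    by blast
  have meas: "(\<lambda>(t, x). k * (2 + \<bar>K t x\<bar>)) \<in> borel_measurable borel"
  proof -
    have e: "(\<lambda>(t, x). k * (2 + \<bar>K t x\<bar>)) = (\<lambda>p. k * (2 + \<bar>(\<lambda>(t, x). K t x) p\<bar>))"
      by (auto simp: fun_eq_iff)
    show ?thesis unfolding e using m by measurable
  qed
  define c1 where "c1 = 8 * k\<^sup>2"
  define c2 where "c2 = 2 * k\<^sup>2"
  have c1: "0 \<le> c1" and c2: "0 \<le> c2" unfolding c1_def c2_def by auto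
  have pw: "ennreal (\<bar>k * (2 + \<bar>y\<bar>)\<bar> powr 2) \<le> ennreal c1 + ennreal c2 * ennreal (\<bar>y\<bar> powr 2)" for y :: real
  proof -
    have "\<bar>k * (2 + \<bar>y\<bar>)\<bar> powr 2 = k\<^sup>2 * (2 + \<bar>y\<bar>)\<^sup>2" by (simp add: power_mult_distrib)
    also have "... \<le> k\<^sup>2 * (8 + 2 * \<bar>y\<bar>\<^sup>2)"
    proof (rule mult_left_mono)
      have "0 \<le> (2 - \<bar>y\<bar>)\<^sup>2" by simp
      thus "(2 + \<bar>y\<bar>)\<^sup>2 \<le> 8 + 2 * \<bar>y\<bar>\<^sup>2" by (simp add: power2_eq_square algebra_simps)
    qed simp
    also have "... = c1 + c2 * (\<bar>y\<bar> powr 2)" by (simp add: c1_def c2_def algebra_simps)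
    finally have "\<bar>k * (2 + \<bar>y\<bar>)\<bar> powr 2 \<le> c1 + c2 * (\<bar>y\<bar> powr 2)" .
    hence "ennreal (\<bar>k * (2 + \<bar>y\<bar>)\<bar> powr 2) \<le> ennreal (c1 + c2 * (\<bar>y\<bar> powr 2))"
      by (rule ennreal_leI)
    also have "... = ennreal c1 + ennreal c2 * ennreal (\<bar>y\<bar> powr 2)"
      using c1 c2 by (simp add: ennreal_plus ennreal_mult)
    finally show ?thesis .
  qed
  define B0 where "B0 = max B 0"
  have "\<forall>P\<in>Pf. (\<integral>\<^sup>+ \<omega>. (\<integral>\<^sup>+ t\<in>{0..T}. ennreal (\<bar>k * (2 + \<bar>K t (X_proc \<omega> t)\<bar>)\<bar> powr 2) \<partial>lborel) \<partial>P)
     \<le> ennreal (c1 * T + c2 * B0)"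
  proof
    fix P assume P: "P \<in> Pf"
    interpret prob_space P using probs P by auto
    define I where "I \<omega> = (\<integral>\<^sup>+ t\<in>{0..T}. ennreal (\<bar>K t (X_proc \<omega> t)\<bar> powr 2) \<partial>lborel)" for \<omega>
    have inner: "(\<integral>\<^sup>+ t\<in>{0..T}. ennreal (\<bar>k * (2 + \<bar>K t (X_proc \<omega> t)\<bar>)\<bar> powr 2) \<partial>lborel)
       \<le> ennreal (c1 * T) + ennreal c2 * I \<omega>" for \<omega>
    proof -
      have "(\<integral>\<^sup>+ t\<in>{0..T}. ennreal (\<bar>k * (2 + \<bar>K t (X_proc \<omega> t)\<bar>)\<bar> powr 2) \<partial>lborel)
         \<le> (\<integral>\<^sup>+ t. ennreal c1 * indicator {0..T} t + ennreal c2 * (ennreal (\<bar>K t (X_proc \<omega> t)\<bar> powr 2) * indicator {0..T} t) \<partial>lborel)"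
      proof (intro nn_integral_mono)
        fix t
        show "ennreal (\<bar>k * (2 + \<bar>K t (X_proc \<omega> t)\<bar>)\<bar> powr 2) * indicator {0..T} t \<le> ennreal c1 * indicator {0..T} t + ennreal c2 * (ennreal (\<bar>K t (X_proc \<omega> t)\<bar> powr 2) * indicator {0..T} t)"
          using pw[of "K t (X_proc \<omega> t)"] by (cases "t \<in> {0..T}") auto
      qed
      also have "... \<le> (\<integral>\<^sup>+ t. ennreal c1 * indicator {0..T} t \<partial>lborel)
          + (\<integral>\<^sup>+ t. ennreal c2 * (ennreal (\<bar>K t (X_proc \<omega> t)\<bar> powr 2) * indicator {0..T} t) \<partial>lborel)"
        by (rule nn_int_add_simple_le) (intro simple_function_compose2[where h="(*)"] simple_function_const simple_function_indicator; simp)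
      also have "... \<le> ennreal (c1 * T) + ennreal c2 * I \<omega>"
      proof (rule add_mono)
        show "(\<integral>\<^sup>+ t. ennreal c1 * indicator {0..T} t \<partial>lborel) \<le> ennreal (c1 * T)"
          using T c1 by (simp add: nn_integral_cmult_indicator ennreal_mult)
        show "(\<integral>\<^sup>+ t. ennreal c2 * (ennreal (\<bar>K t (X_proc \<omega> t)\<bar> powr 2) * indicator {0..T} t) \<partial>lborel) \<le> ennreal c2 * I \<omega>"
          unfolding I_def by (rule nn_int_cmult_le) simp
      qed
      finally show ?thesis .
    qed
    have "(\<integral>\<^sup>+ \<omega>. (\<integral>\<^sup>+ t\<in>{0..T}. ennreal (\<bar>k * (2 + \<bar>K t (X_proc \<omega> t)\<bar>)\<bar> powr 2) \<partial>lborel) \<partial>P)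
       \<le> (\<integral>\<^sup>+ \<omega>. ennreal (c1 * T) + ennreal c2 * I \<omega> \<partial>P)"
      by (intro nn_integral_mono inner)
    also have "... \<le> (\<integral>\<^sup>+ \<omega>. ennreal (c1 * T) \<partial>P) + (\<integral>\<^sup>+ \<omega>. ennreal c2 * I \<omega> \<partial>P)"
      by (rule nn_int_add_simple_le) simp
    also have "... \<le> ennreal (c1 * T) + ennreal c2 * ennreal B0"
    proof (rule add_mono)
      show "(\<integral>\<^sup>+ \<omega>. ennreal (c1 * T) \<partial>P) \<le> ennreal (c1 * T)" by (simp add: emeasure_space_1)
      have "(\<integral>\<^sup>+ \<omega>. ennreal c2 * I \<omega> \<partial>P) \<le> ennreal c2 * integral\<^sup>N P I" by (rule nn_int_cmult_le) simp
      also have "... \<le> ennreal c2 * ennreal B0"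
      proof (rule mult_left_mono)
        have "integral\<^sup>N P I \<le> ennreal B" using B[OF P] unfolding I_def by simp
        also have "... \<le> ennreal B0" unfolding B0_def by (rule ennreal_leI) simp
        finally show "integral\<^sup>N P I \<le> ennreal B0" .
      qed simp
      finally show "(\<integral>\<^sup>+ \<omega>. ennreal c2 * I \<omega> \<partial>P) \<le> ennreal c2 * ennreal B0" .
    qed
    also have "... = ennreal (c1 * T + c2 * B0)"
      using c1 c2 T by (simp add: B0_def ennreal_plus ennreal_mult)
    finally show "(\<integral>\<^sup>+ \<omega>. (\<integral>\<^sup>+ t\<in>{0..T}. ennreal (\<bar>k * (2 + \<bar>K t (X_proc \<omega> t)\<bar>)\<bar> powr 2) \<partial>lborel) \<partial>P)
     \<le> ennreal (c1 * T + c2 * B0)" .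
  qed
  thus ?thesis unfolding Lp_P_def using meas by blast
qed


lemma ratio_bound: fixes A B K P S s Q m :: real
 assumes "B > 0" "\<bar>A\<bar> \<le> K*P*S" "0 \<le> s" "s \<le> S" "S\<^sup>2 \<le> 4*Q" "m*Q \<le> B" "m > 0" "K \<ge> 0" "P \<ge> 0"
 shows "\<bar>A/B\<bar> * s \<le> 4*K*P/m"
proof -
  have "\<bar>A\<bar> * s \<le> (K*P*S) * S" using assms by (intro mult_mono) auto
  also have "... = (K*P) * S\<^sup>2" by (simp add: power2_eq_square)
  also have "... \<le> (K*P) * (4*Q)" using assms by (intro mult_left_mono) auto
  also have "... \<le> (K*P) * (4*(B/m))"
    using assms by (intro mult_left_mono) (auto simp: pos_le_divide_eq mult.commute)
  finally have "\<bar>A\<bar> * s \<le> 4*K*P/m * B" by (simp add: field_simps)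
  thus ?thesis using assms(1) by (simp add: abs_div pos_divide_le_eq)
qed

lemma term_bound: fixes c p u K P :: real assumes "0 < p" "p \<le> P" "\<bar>u\<bar> \<le> K"
  shows "\<bar>c*(p*u)\<bar> \<le> K*P*\<bar>c\<bar>"
proof -
  have "\<bar>c*(p*u)\<bar> = \<bar>c\<bar>*(p*\<bar>u\<bar>)" using assms by (simp add: abs_mult)
  also have "... \<le> \<bar>c\<bar>*(P*K)" using assms by (intro mult_left_mono mult_mono) auto
  finally show ?thesis by (simp add: algebra_simps)
qed

lemma term_low: fixes m p c :: real assumes "m \<le> p" shows "m*c\<^sup>2 \<le> c*(p*c)"
proof -
  have "m*c\<^sup>2 \<le> p*c\<^sup>2" using assms by (intro mult_right_mono) auto
  thus ?thesis by (simp add: power2_eq_square algebra_simps)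
qed

lemma sq4: fixes a b c d :: real shows "(a+b+c+d)\<^sup>2 \<le> 4*(a\<^sup>2+b\<^sup>2+c\<^sup>2+d\<^sup>2)"
proof -
  have "4*(a\<^sup>2+b\<^sup>2+c\<^sup>2+d\<^sup>2) - (a+b+c+d)\<^sup>2 = (a-b)\<^sup>2+(a-c)\<^sup>2+(a-d)\<^sup>2+(b-c)\<^sup>2+(b-d)\<^sup>2+(c-d)\<^sup>2"
    by (simp add: power2_eq_square algebra_simps)
  moreover have "(a-b)\<^sup>2+(a-c)\<^sup>2+(a-d)\<^sup>2+(b-c)\<^sup>2+(b-d)\<^sup>2+(c-d)\<^sup>2 \<ge> 0" by simp
  ultimately show ?thesis by linarith
qed

lemma lam_real_bound:
 fixes ca cb cc cd ua ub uc ud pa pb pc pd A B la lam K P m :: real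
 assumes p: "0<pa" "0<pb" "0<pc" "0<pd" and ca: "ca \<noteq> 0"
  and P: "pa \<le> P" "pb \<le> P" "pc \<le> P" "pd \<le> P"
  and m: "0 < m" "m \<le> pa" "m \<le> pb" "m \<le> pc" "m \<le> pd"
  and u: "\<bar>ua\<bar> \<le> K" "\<bar>ub\<bar> \<le> K" "\<bar>uc\<bar> \<le> K" "\<bar>ud\<bar> \<le> K"
  and A: "A = ca*(pa*ua)+cb*(pb*ub)+cc*(pc*uc)+cd*(pd*ud)"
  and B: "B = ca*(pa*ca)+cb*(pb*cb)+cc*(pc*cc)+cd*(pd*cd)"
  and la: "la = A/B"
  and lam: "lam = (if 2*ud - la*(2*cd) \<ge> 0 then la else (A - 2*cd*(2*ud)*pd/4)/(B - (2*cd)\<^sup>2*pd/4))"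
 shows "\<bar>lam\<bar> * (\<bar>ca\<bar>+\<bar>cb\<bar>+\<bar>cc\<bar>) \<le> 4*K*P/m"
proof -
  have K: "K \<ge> 0" using u by linarith
  have P0: "P \<ge> 0" using P p by linarith
  have e: "ca*(pa*ca) = pa*ca\<^sup>2" by (simp add: power2_eq_square)
  have "pa*ca\<^sup>2 > 0" using p ca by simp
  hence pos1: "ca*(pa*ca) > 0" unfolding e .
  have "cb*(pb*cb) \<ge> 0" "cc*(pc*cc) \<ge> 0" "cd*(pd*cd) \<ge> 0" using p
    by (metis mult.left_commute mult_nonneg_nonneg less_imp_le zero_le_square)+
  hence B3: "B - cd*(pd*cd) > 0" and Bp: "B > 0" using B pos1 by linarith+
  note tb = term_bound[OF p(1) P(1) u(1), of ca] term_bound[OF p(2) P(2) u(2), of cb]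
      term_bound[OF p(3) P(3) u(3), of cc] term_bound[OF p(4) P(4) u(4), of cd]
  note tl = term_low[OF m(2), of ca] term_low[OF m(3), of cb] term_low[OF m(4), of cc] term_low[OF m(5), of cd]
  show ?thesis
  proof (cases "2*ud - la*(2*cd) \<ge> 0")
    case True
    hence "lam = A/B" using lam la by simp
    moreover have "\<bar>A/B\<bar> * (\<bar>ca\<bar>+\<bar>cb\<bar>+\<bar>cc\<bar>) \<le> 4*K*P/m"
    proof (rule ratio_bound[OF Bp _ _ _ _ _ m(1) K P0, where S="\<bar>ca\<bar>+\<bar>cb\<bar>+\<bar>cc\<bar>+\<bar>cd\<bar>" and Q="ca\<^sup>2+cb\<^sup>2+cc\<^sup>2+cd\<^sup>2"])
      show "\<bar>A\<bar> \<le> K*P*(\<bar>ca\<bar>+\<bar>cb\<bar>+\<bar>cc\<bar>+\<bar>cd\<bar>)" unfolding A using tb by (simp add: algebra_simps) linarith?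
      show "(\<bar>ca\<bar>+\<bar>cb\<bar>+\<bar>cc\<bar>+\<bar>cd\<bar>)\<^sup>2 \<le> 4*(ca\<^sup>2+cb\<^sup>2+cc\<^sup>2+cd\<^sup>2)" using sq4[of "\<bar>ca\<bar>" "\<bar>cb\<bar>" "\<bar>cc\<bar>" "\<bar>cd\<bar>"] by simp
      show "m*(ca\<^sup>2+cb\<^sup>2+cc\<^sup>2+cd\<^sup>2) \<le> B" unfolding B using tl by (simp add: algebra_simps)
    qed auto
    ultimately show ?thesis by simp
  next
    case False
    hence "lam = (A - cd*(pd*ud))/(B - cd*(pd*cd))" using lam la by (simp add: power2_eq_square algebra_simps)
    moreover have "\<bar>(A - cd*(pd*ud))/(B - cd*(pd*cd))\<bar> * (\<bar>ca\<bar>+\<bar>cb\<bar>+\<bar>cc\<bar>) \<le> 4*K*P/m"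
    proof (rule ratio_bound[OF B3 _ _ _ _ _ m(1) K P0, where S="\<bar>ca\<bar>+\<bar>cb\<bar>+\<bar>cc\<bar>" and Q="ca\<^sup>2+cb\<^sup>2+cc\<^sup>2"])
      show "\<bar>A - cd*(pd*ud)\<bar> \<le> K*P*(\<bar>ca\<bar>+\<bar>cb\<bar>+\<bar>cc\<bar>)" unfolding A using tb by (simp add: algebra_simps) linarith?
      show "(\<bar>ca\<bar>+\<bar>cb\<bar>+\<bar>cc\<bar>)\<^sup>2 \<le> 4*(ca\<^sup>2+cb\<^sup>2+cc\<^sup>2)" using sq4[of "\<bar>ca\<bar>" "\<bar>cb\<bar>" "\<bar>cc\<bar>" 0] by simp
      show "m*(ca\<^sup>2+cb\<^sup>2+cc\<^sup>2) \<le> B - cd*(pd*cd)" unfolding B using tl by (simp add: algebra_simps)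
    qed auto
    ultimately show ?thesis by simp
  qed
qed



context pcl begin
lemma lam_bound: assumes "\<And>i. \<bar>v$i\<bar> \<le> K"
  shows "\<bar>lamc psi c v\<bar> * (\<bar>c$1\<bar>+\<bar>c$2\<bar>+\<bar>c$3\<bar>) \<le> 4*K*(psi$1+psi$2+psi$3+psi$4)/min (min (psi$1) (psi$2)) (min (psi$3) (psi$4))"
proof (rule lam_real_bound[where ca="c$1" and cb="c$2" and cc="c$3" and cd="c$4" and B="c \<bullet> Psi_mul psi c"
     and A="c \<bullet> Psi_mul psi v" and lam="lamc psi c v" and ua="v$1" and ub="v$2" and uc="v$3" and ud="v$4"
     and pa="psi$1" and pb="psi$2" and pc="psi$3" and pd="psi$4" and la="(c \<bullet> Psi_mul psi v)/(c \<bullet> Psi_mul psi c)"])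
  show "c \<bullet> Psi_mul psi c = c$1*(psi$1*c$1)+c$2*(psi$2*c$2)+c$3*(psi$3*c$3)+c$4*(psi$4*c$4)"
    by (simp add: inner4 Psi_mul_def)
  show "c \<bullet> Psi_mul psi v = c$1*(psi$1* v$1)+c$2*(psi$2* v$2)+c$3*(psi$3* v$3)+c$4*(psi$4* v$4)"
    by (simp add: inner4 Psi_mul_def)
  show "lamc psi c v = (if 2* v$4 - (c \<bullet> Psi_mul psi v)/(c \<bullet> Psi_mul psi c)*(2*c$4) \<ge> 0 then (c \<bullet> Psi_mul psi v)/(c \<bullet> Psi_mul psi c) else ((c \<bullet> Psi_mul psi v) - 2*c$4*(2* v$4)*psi$4/4)/((c \<bullet> Psi_mul psi c) - (2*c$4)\<^sup>2*psi$4/4))"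
    unfolding lamc_def Let_def by simp
  have m: "0 < min (min (psi$1) (psi$2)) (min (psi$3) (psi$4))" using ppos by simp
  thus "0 < min (min (psi$1) (psi$2)) (min (psi$3) (psi$4))" .
qed (use ppos ca assms in \<open>auto simp: less_imp_le\<close>)

lemma norm_bound: "(norm (zc psi c v))\<^sup>2 \<le> (psi$1+psi$2+psi$3+psi$4) * gg"
proof -
  let ?z = "zc psi c v"
  have g: "gg = ?z$1*(?z$1/psi$1) + ?z$2*(?z$2/psi$2) + ?z$3*(?z$3/psi$3) + ?z$4*(?z$4/psi$4)"
    using zz by (simp add: gg_def inner4 Psi_inv_mul_def)
  have t: "0 \<le> ?z$i*(?z$i/psi$i)" for i using ppos[of i] by (simp add: less_imp_le)
  have ti: "?z$i*(?z$i/psi$i) \<le> gg" for i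
  proof -
    have "i = 1 \<or> i = 2 \<or> i = 3 \<or> i = 4" by (rule exhaust_4)
    thus ?thesis using t[of 1] t[of 2] t[of 3] t[of 4] g by auto
  qed
  have sq: "?z$i * ?z$i \<le> psi$i * gg" for i
  proof -
    have "?z$i * ?z$i = psi$i * (?z$i*(?z$i/psi$i))" using ppos[of i] by simp
    also have "... \<le> psi$i * gg" using ppos[of i] ti[of i] by (intro mult_left_mono) auto
    finally show ?thesis .
  qed
  have "(norm ?z)\<^sup>2 = ?z \<bullet> ?z" by (simp add: power2_norm_eq_inner)
  also have "... = ?z$1 * ?z$1 + ?z$2 * ?z$2 + ?z$3 * ?z$3 + ?z$4 * ?z$4" by (simp add: inner4)
  also have "... \<le> psi$1 * gg + psi$2 * gg + psi$3 * gg + psi$4 * gg"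
    using sq[of 1] sq[of 2] sq[of 3] sq[of 4] by linarith
  finally show ?thesis by (simp add: algebra_simps)
qed
end

lemma frob: "frobenius_norm (mat2 a b c d) = sqrt (a\<^sup>2 + b\<^sup>2 + c\<^sup>2 + d\<^sup>2)"
  by (simp add: frobenius_norm_def mat2_def sum_2 add.assoc)

lemma sqrt4: fixes a b c d :: real shows "sqrt (a\<^sup>2 + b\<^sup>2 + c\<^sup>2 + d\<^sup>2) \<le> \<bar>a\<bar>+\<bar>b\<bar>+\<bar>c\<bar>+\<bar>d\<bar>"
proof -
  have "a\<^sup>2 + b\<^sup>2 + c\<^sup>2 + d\<^sup>2 \<le> (\<bar>a\<bar>+\<bar>b\<bar>+\<bar>c\<bar>+\<bar>d\<bar>)\<^sup>2"
    by (simp add: power2_eq_square algebra_simps)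
  hence "sqrt (a\<^sup>2 + b\<^sup>2 + c\<^sup>2 + d\<^sup>2) \<le> sqrt ((\<bar>a\<bar>+\<bar>b\<bar>+\<bar>c\<bar>+\<bar>d\<bar>)\<^sup>2)" by (rule real_sqrt_le_mono)
  thus ?thesis by simp
qed



theorem lemma5p6:
  fixes T S0 Sig0 A0 Sig_lo Sig_hi :: real
    and Pf :: "path measure set"
    and psi :: vec4
    and C :: "real \<Rightarrow> real \<Rightarrow> real \<Rightarrow> real"
    and V :: vfun
    and alph bet gam delt :: cfun
    and K_C :: "real \<Rightarrow> real \<times> real \<times> real \<times> real \<Rightarrow> real"
    and K_V :: real
  assumes T_pos: "0 < T"
    and S0_pos: "0 < S0" and Sig0_pos: "0 < Sig0"
    and Sig_bounds: "0 < Sig_lo" "Sig_lo < Sig0" "Sig0 < Sig_hi"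
    and psi_pos: "\<forall>i. 0 < psi $ i"
    and models: "\<forall>P\<in>Pf. prob_space P \<and> sets P = sets (path_space T S0 Sig0 A0)"
    and coeffs_borel: "(\<lambda>(t, S, A, M). alph t S A M) \<in> borel_measurable borel"
        "(\<lambda>(t, S, A, M). bet t S A M) \<in> borel_measurable borel"
        "(\<lambda>(t, S, A, M). gam t S A M) \<in> borel_measurable borel"
        "(\<lambda>(t, S, A, M). delt t S A M) \<in> borel_measurable borel"
    and C_Sig_nz: "\<And>t S A M Sig. in_D T Sig_lo Sig_hi t (S, A, M, Sig) \<Longrightarrow> C_Sig C t S Sig \<noteq> 0"
    and C_SigSig_bound: "\<And>t S A M Sig. in_D T Sig_lo Sig_hi t (S, A, M, Sig) \<Longrightarrow>
           \<bar>C_SigSig C t S Sig\<bar> \<le> K_C t (S, A, M, Sig) *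
             (\<bar>C_Sig C t S Sig\<bar> + \<bar>S\<^sup>2 * C_SS C t S Sig\<bar> + \<bar>S * C_SSig C t S Sig\<bar>)"
    and K_C_L2: "Lp_P T Pf 2 K_C"
    and V_bounds: "\<And>t S A M Sig. in_D T Sig_lo Sig_hi t (S, A, M, Sig) \<Longrightarrow>
           \<bar>V_Sig V t S A M Sig\<bar> \<le> K_V \<and>
           \<bar>bet t S A M * V_A V t S A M Sig + S\<^sup>2 * Gamma_V V gam t S A M Sig\<bar> \<le> K_V \<and>
           \<bar>S * dDelta_dSig V gam t S A M Sig\<bar> \<le> K_V \<and>
           \<bar>V_SigSig V t S A M Sig\<bar> \<le> K_V"
  shows
    \<comment> \<open>(a)\<close>
    "(\<forall>t x \<psi>. in_D T Sig_lo Sig_hi t x \<longrightarrow> 0 < \<psi> \<longrightarrow>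
        (let z_star = zeta0 (snd (snd (snd x))) + \<psi> *\<^sub>R zeta_tilde psi C V bet gam t x;
             val = - (1/2) * g_tilde psi C V bet gam t x * \<psi>
         in z_star \<in> Z0_lin C t x \<and> H1 psi V bet gam \<psi> t x z_star = val \<and>
            (\<forall>z\<in>Z0_lin C t x. val \<le> H1 psi V bet gam \<psi> t x z)) \<and>
        cvec C t x \<bullet> zeta_tilde psi C V bet gam t x = 0 \<and>
        e4 \<bullet> zeta_tilde psi C V bet gam t x \<ge> 0)
     \<comment> \<open>(b)\<close>
     \<and> (\<forall>t x \<psi>. in_D T Sig_lo Sig_hi t x \<longrightarrow> 0 < \<psi> \<longrightarrow>
        - (1/2) * g_tilde psi C V bet gam t x * \<psi> =
          (INF z. L1 psi C V bet gam \<psi> t x z (lam psi C V bet gam t x) (mu psi C V bet gam t x)))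
     \<comment> \<open>(c)\<close>
     \<and> (\<exists>K_g>0. \<forall>t x. in_D T Sig_lo Sig_hi t x \<longrightarrow>
          0 \<le> g_tilde psi C V bet gam t x \<and> g_tilde psi C V bet gam t x \<le> K_g)
     \<comment> \<open>(d)\<close>
     \<and> (\<exists>K_z\<ge>1. \<forall>t x \<psi>. in_D T Sig_lo Sig_hi t x \<longrightarrow> 0 < \<psi> \<longrightarrow>
          norm (zeta_psi Sig_lo Sig_hi psi C V bet gam \<psi> t x - zeta0 (snd (snd (snd x)))) \<le> K_z * \<psi>)
     \<comment> \<open>(e)\<close>
     \<and> (\<forall>t x \<psi>. in_D T Sig_lo Sig_hi t x \<longrightarrow> 0 < \<psi> \<longrightarrow>
          H1 psi V bet gam \<psi> t x (zeta_psi Sig_lo Sig_hi psi C V bet gam \<psi> t x) =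
            - (1/2) * g_tilde psi C V bet gam t x
              * indicator {Sig_lo<..<Sig_hi} (snd (snd (snd x))) * \<psi>)
     \<comment> \<open>(f)\<close>
     \<and> (\<exists>K_l. Lp_P T Pf 2 K_l \<and>
          (\<forall>t S A M Sig. in_D T Sig_lo Sig_hi t (S, A, M, Sig) \<longrightarrow>
             \<bar>lam psi C V bet gam t (S, A, M, Sig)\<bar>
             * frobenius_norm (mat2 (S\<^sup>2 * C_SS C t S Sig) (S * C_SSig C t S Sig)
                                    (S * C_SSig C t S Sig) (C_SigSig C t S Sig))
             \<le> K_l t (S, A, M, Sig)))"
proof -
  have PC: "pcl psi (cvec C t (S,A,M,Sig))"
    if D: "in_D T Sig_lo Sig_hi t (S,A,M,Sig)" for t S A M Sig
    by unfold_locales (use psi_pos C_Sig_nz[OF D] in \<open>auto simp: cvec_def\<close>)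
  define Kv where "Kv = K_V * (1 + Sig_hi)"
  have VB: "\<bar>vvec V bet gam t (S,A,M,Sig) $ i\<bar> \<le> Kv"
    if D: "in_D T Sig_lo Sig_hi t (S,A,M,Sig)" for t S A M Sig i
  proof -
    from D have Sig: "Sig_lo \<le> Sig" "Sig \<le> Sig_hi" by (auto simp: in_D_def)
    have Sp: "0 < Sig" using Sig Sig_bounds by linarith
    note vb = V_bounds[OF D]
    have KV0: "0 \<le> K_V" using vb by linarith
    have hi0: "0 \<le> Sig_hi" using Sig_bounds by linarith
    have KKv: "K_V \<le> Kv" unfolding Kv_def using KV0 hi0 by (simp add: algebra_simps)
    have sb: "\<bar>Sig * y\<bar> \<le> Kv" if "\<bar>y\<bar> \<le> K_V" for y
    proof -
      have "\<bar>Sig * y\<bar> = Sig * \<bar>y\<bar>" using Sp by (simp add: abs_mult)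
      also have "... \<le> Sig_hi * K_V" using Sig Sp that KV0 by (intro mult_mono) auto
      also have "... \<le> Kv" unfolding Kv_def using KV0 by (simp add: algebra_simps)
      finally show ?thesis .
    qed
    have "i = 1 \<or> i = 2 \<or> i = 3 \<or> i = 4" by (rule exhaust_4)
    moreover have "\<bar>vvec V bet gam t (S,A,M,Sig) $ 1\<bar> \<le> Kv" using vb KKv by (simp add: vvec_def)
    moreover have "\<bar>vvec V bet gam t (S,A,M,Sig) $ 2\<bar> \<le> Kv" using vb sb by (simp add: vvec_def)
    moreover have "\<bar>vvec V bet gam t (S,A,M,Sig) $ 3\<bar> \<le> Kv" using vb sb[of "S * dDelta_dSig V gam t S A M Sig"]
      by (simp add: vvec_def mult.assoc)
    moreover have "\<bar>vvec V bet gam t (S,A,M,Sig) $ 4\<bar> \<le> Kv" using vb KKv KV0 by (simp add: vvec_def)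
    ultimately show ?thesis by blast
  qed
  define Pp where "Pp = psi$1+psi$2+psi$3+psi$4"
  have Pp0: "0 < Pp" unfolding Pp_def using psi_pos by (simp add: add_pos_pos)
  define mm where "mm = min (min (psi$1) (psi$2)) (min (psi$3) (psi$4))"
  have mm0: "0 < mm" unfolding mm_def using psi_pos by simp
  define Kg where "Kg = 1 + Pp * Kv\<^sup>2"
  have Kg0: "0 < Kg" unfolding Kg_def using Pp0 by (simp add: add_pos_nonneg)
  have GB: "0 \<le> g_tilde psi C V bet gam t (S,A,M,Sig) \<and> g_tilde psi C V bet gam t (S,A,M,Sig) \<le> Kg"
    if D: "in_D T Sig_lo Sig_hi t (S,A,M,Sig)" for t S A M Sig
  proof -
    interpret P: pcl psi "cvec C t (S,A,M,Sig)" "vvec V bet gam t (S,A,M,Sig)" using PC[OF D] .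
    let ?v = "vvec V bet gam t (S,A,M,Sig)"
    have ge: "g_tilde psi C V bet gam t (S,A,M,Sig) = P.gg" unfolding g_eq P.gg_def ..
    have tv: "?v$i * (psi$i * ?v$i) \<le> psi$i * Kv\<^sup>2" for i
    proof -
      have "?v$i * (psi$i * ?v$i) = psi$i * \<bar>?v$i\<bar>\<^sup>2" by (simp add: power2_eq_square)
      also have "... \<le> psi$i * Kv\<^sup>2" using psi_pos VB[OF D, of i]
        by (intro mult_left_mono power_mono) (auto simp: less_imp_le)
      finally show ?thesis .
    qed
    have "?v \<bullet> Psi_mul psi ?v \<le> Pp * Kv\<^sup>2"
      using tv[of 1] tv[of 2] tv[of 3] tv[of 4] by (simp add: inner4 Psi_mul_def Pp_def algebra_simps)
    thus ?thesis using P.g_nonneg P.g_le ge unfolding Kg_def by simp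
  qed
  have z04: "zeta0 Sig $ 4 = 0" for Sig by (simp add: zeta0_def)
  have HA: "(let z_star = zeta0 Sig + \<psi> *\<^sub>R zeta_tilde psi C V bet gam t (S,A,M,Sig);
             val = - (1/2) * g_tilde psi C V bet gam t (S,A,M,Sig) * \<psi>
         in z_star \<in> Z0_lin C t (S,A,M,Sig) \<and> H1 psi V bet gam \<psi> t (S,A,M,Sig) z_star = val \<and>
            (\<forall>z\<in>Z0_lin C t (S,A,M,Sig). val \<le> H1 psi V bet gam \<psi> t (S,A,M,Sig) z)) \<and>
        cvec C t (S,A,M,Sig) \<bullet> zeta_tilde psi C V bet gam t (S,A,M,Sig) = 0 \<and>
        e4 \<bullet> zeta_tilde psi C V bet gam t (S,A,M,Sig) \<ge> 0"
    if D: "in_D T Sig_lo Sig_hi t (S,A,M,Sig)" and ps: "0 < \<psi>" for t S A M Sig \<psi>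
  proof -
    interpret P: pcl psi "cvec C t (S,A,M,Sig)" "vvec V bet gam t (S,A,M,Sig)" using PC[OF D] .
    let ?c = "cvec C t (S,A,M,Sig)" and ?v = "vvec V bet gam t (S,A,M,Sig)"
    have ge: "g_tilde psi C V bet gam t (S,A,M,Sig) = P.gg" unfolding g_eq P.gg_def ..
    have ze: "zeta_tilde psi C V bet gam t (S,A,M,Sig) = zc psi ?c ?v" by (rule zt_eq)
    have mem: "zeta0 Sig + \<psi> *\<^sub>R zc psi ?c ?v \<in> Z0_lin C t (S,A,M,Sig)"
      using P.at_star(2,3)[OF ps] by (simp add: Z0_lin_def Z0_def z04 P.e4_inner)
    have val: "H1 psi V bet gam \<psi> t (S,A,M,Sig) (zeta0 Sig + \<psi> *\<^sub>R zc psi ?c ?v) = - (1/2) * P.gg * \<psi>"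
      using P.at_star(1)[OF ps] by (simp add: H1_def)
    have low: "- (1/2) * P.gg * \<psi> \<le> H1 psi V bet gam \<psi> t (S,A,M,Sig) z" if z: "z \<in> Z0_lin C t (S,A,M,Sig)" for z
    proof -
      from z have "?c \<bullet> (z - zeta0 Sig) = 0" "(z - zeta0 Sig) $ 4 \<ge> 0"
        by (auto simp: Z0_lin_def Z0_def z04)
      from P.feas_lower[OF ps this] show ?thesis by (simp add: H1_def)
    qed
    show ?thesis unfolding Let_def ze ge using mem val low P.kkt(1,2) by (simp add: P.e4_inner)
  qed
  show ?thesis
  proof (intro conjI)
    show "\<forall>t x \<psi>. in_D T Sig_lo Sig_hi t x \<longrightarrow> 0 < \<psi> \<longrightarrow>
        (let z_star = zeta0 (snd (snd (snd x))) + \<psi> *\<^sub>R zeta_tilde psi C V bet gam t x;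
             val = - (1/2) * g_tilde psi C V bet gam t x * \<psi>
         in z_star \<in> Z0_lin C t x \<and> H1 psi V bet gam \<psi> t x z_star = val \<and>
            (\<forall>z\<in>Z0_lin C t x. val \<le> H1 psi V bet gam \<psi> t x z)) \<and>
        cvec C t x \<bullet> zeta_tilde psi C V bet gam t x = 0 \<and>
        e4 \<bullet> zeta_tilde psi C V bet gam t x \<ge> 0"
    proof (intro allI impI)
      fix t x \<psi> assume D: "in_D T Sig_lo Sig_hi t x" and ps: "0 < (\<psi>::real)"
      obtain S A M Sig where x: "x = (S,A,M,Sig)" by (cases x) auto
      show "(let z_star = zeta0 (snd (snd (snd x))) + \<psi> *\<^sub>R zeta_tilde psi C V bet gam t x;
             val = - (1/2) * g_tilde psi C V bet gam t x * \<psi>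
         in z_star \<in> Z0_lin C t x \<and> H1 psi V bet gam \<psi> t x z_star = val \<and>
            (\<forall>z\<in>Z0_lin C t x. val \<le> H1 psi V bet gam \<psi> t x z)) \<and>
        cvec C t x \<bullet> zeta_tilde psi C V bet gam t x = 0 \<and>
        e4 \<bullet> zeta_tilde psi C V bet gam t x \<ge> 0"
        using HA[of t S A M Sig \<psi>] D ps unfolding x by simp
    qed
  next
    show "\<forall>t x \<psi>. in_D T Sig_lo Sig_hi t x \<longrightarrow> 0 < \<psi> \<longrightarrow>
        - (1/2) * g_tilde psi C V bet gam t x * \<psi> =
          (INF z. L1 psi C V bet gam \<psi> t x z (lam psi C V bet gam t x) (mu psi C V bet gam t x))"
    proof (intro allI impI)
      fix t x \<psi> assume D0: "in_D T Sig_lo Sig_hi t x" and ps: "0 < (\<psi>::real)"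
      obtain S A M Sig where x: "x = (S,A,M,Sig)" by (cases x) auto
      have D: "in_D T Sig_lo Sig_hi t (S,A,M,Sig)" using D0 x by simp
      interpret P: pcl psi "cvec C t (S,A,M,Sig)" "vvec V bet gam t (S,A,M,Sig)" using PC[OF D] .
      let ?c = "cvec C t (S,A,M,Sig)" and ?v = "vvec V bet gam t (S,A,M,Sig)"
      have ge: "g_tilde psi C V bet gam t (S,A,M,Sig) = P.gg" unfolding g_eq P.gg_def ..
      define f where "f z = L1 psi C V bet gam \<psi> t (S,A,M,Sig) z (lam psi C V bet gam t (S,A,M,Sig)) (mu psi C V bet gam t (S,A,M,Sig))" for z
      have feq: "f z = (z - zeta0 Sig) \<bullet> Psi_inv_mul psi (z - zeta0 Sig) / (2 * \<psi>) - ?v \<bullet> (z - zeta0 Sig)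
          + lamc psi ?c ?v * (?c \<bullet> (z - zeta0 Sig)) - muc psi ?c ?v * (e4 \<bullet> (z - zeta0 Sig))" for z
        by (simp add: f_def L1_def H1_def lam_eq mu_eq)
      have "Inf (range f) = - (1/2) * P.gg * \<psi>"
      proof (rule cInf_eq_minimum)
        have "f (zeta0 Sig + \<psi> *\<^sub>R zc psi ?c ?v) = - (1/2) * P.gg * \<psi>"
          unfolding feq using P.at_star[OF ps] P.kkt(1,3) by (auto simp: P.e4_inner)
        thus "- (1/2) * P.gg * \<psi> \<in> range f" by (metis rangeI)
      next
        fix y assume "y \<in> range f"
        then obtain z where "y = f z" by auto
        thus "- (1/2) * P.gg * \<psi> \<le> y" unfolding feq using P.lagr_lower[OF ps] by simp
      qed
      thus "- (1/2) * g_tilde psi C V bet gam t x * \<psi> =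
          (INF z. L1 psi C V bet gam \<psi> t x z (lam psi C V bet gam t x) (mu psi C V bet gam t x))"
        unfolding x ge f_def by simp
    qed
  next
    show "\<exists>K_g>0. \<forall>t x. in_D T Sig_lo Sig_hi t x \<longrightarrow>
          0 \<le> g_tilde psi C V bet gam t x \<and> g_tilde psi C V bet gam t x \<le> K_g"
      using Kg0 GB by (intro exI[of _ Kg]) (auto simp: split_paired_all)
  next
    show "\<exists>K_z\<ge>1. \<forall>t x \<psi>. in_D T Sig_lo Sig_hi t x \<longrightarrow> 0 < \<psi> \<longrightarrow>
          norm (zeta_psi Sig_lo Sig_hi psi C V bet gam \<psi> t x - zeta0 (snd (snd (snd x)))) \<le> K_z * \<psi>"
    proof (intro exI[of _ "1 + Pp * Kg"] conjI allI impI)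
      show "1 \<le> 1 + Pp * Kg" using Pp0 Kg0 by simp
      fix t x \<psi> assume D0: "in_D T Sig_lo Sig_hi t x" and ps: "0 < (\<psi>::real)"
      obtain S A M Sig where x: "x = (S,A,M,Sig)" by (cases x) auto
      have D: "in_D T Sig_lo Sig_hi t (S,A,M,Sig)" using D0 x by simp
      interpret P: pcl psi "cvec C t (S,A,M,Sig)" "vvec V bet gam t (S,A,M,Sig)" using PC[OF D] .
      let ?c = "cvec C t (S,A,M,Sig)" and ?v = "vvec V bet gam t (S,A,M,Sig)"
      have ge: "g_tilde psi C V bet gam t (S,A,M,Sig) = P.gg" unfolding g_eq P.gg_def ..
      let ?n = "norm (zc psi ?c ?v)"
      have "?n\<^sup>2 \<le> Pp * P.gg" using P.norm_bound unfolding Pp_def .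
      also have "... \<le> Pp * Kg" using GB[OF D] ge Pp0 by (intro mult_left_mono) auto
      finally have n2: "?n\<^sup>2 \<le> Pp * Kg" .
      have "?n \<le> 1 + ?n\<^sup>2"
      proof -
        have "0 \<le> (?n - 1/2)\<^sup>2" by simp
        thus ?thesis by (simp add: power2_eq_square algebra_simps)
      qed
      hence nb: "?n \<le> 1 + Pp * Kg" using n2 by linarith
      have "norm (zeta_psi Sig_lo Sig_hi psi C V bet gam \<psi> t (S,A,M,Sig) - zeta0 Sig)
          = \<bar>indicator {Sig_lo<..<Sig_hi} Sig * \<psi>\<bar> * ?n"
        by (simp add: zeta_psi_def zt_eq)
      also have "... \<le> \<psi> * ?n" using ps by (intro mult_right_mono) (auto simp: indicator_def)
      also have "... \<le> \<psi> * (1 + Pp * Kg)" using nb ps by (intro mult_left_mono) auto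
      finally show "norm (zeta_psi Sig_lo Sig_hi psi C V bet gam \<psi> t x - zeta0 (snd (snd (snd x)))) \<le> (1 + Pp * Kg) * \<psi>"
        unfolding x by (simp add: mult.commute)
    qed
  next
    show "\<forall>t x \<psi>. in_D T Sig_lo Sig_hi t x \<longrightarrow> 0 < \<psi> \<longrightarrow>
          H1 psi V bet gam \<psi> t x (zeta_psi Sig_lo Sig_hi psi C V bet gam \<psi> t x) =
            - (1/2) * g_tilde psi C V bet gam t x
              * indicator {Sig_lo<..<Sig_hi} (snd (snd (snd x))) * \<psi>"
    proof (intro allI impI)
      fix t x \<psi> assume D0: "in_D T Sig_lo Sig_hi t x" and ps: "0 < (\<psi>::real)"
      obtain S A M Sig where x: "x = (S,A,M,Sig)" by (cases x) auto
      have D: "in_D T Sig_lo Sig_hi t (S,A,M,Sig)" using D0 x by simp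
      show "H1 psi V bet gam \<psi> t x (zeta_psi Sig_lo Sig_hi psi C V bet gam \<psi> t x) =
            - (1/2) * g_tilde psi C V bet gam t x
              * indicator {Sig_lo<..<Sig_hi} (snd (snd (snd x))) * \<psi>"
      proof (cases "Sig \<in> {Sig_lo<..<Sig_hi}")
        case True
        have "zeta_psi Sig_lo Sig_hi psi C V bet gam \<psi> t x = zeta0 Sig + \<psi> *\<^sub>R zeta_tilde psi C V bet gam t (S,A,M,Sig)"
          using True unfolding x by (simp add: zeta_psi_def)
        thus ?thesis using HA[OF D ps] True unfolding x by (simp add: Let_def)
      next
        case False
        have "zeta_psi Sig_lo Sig_hi psi C V bet gam \<psi> t x = zeta0 Sig"
          using False unfolding x by (simp add: zeta_psi_def)
        thus ?thesis using False unfolding x by (simp add: H1_def)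
      qed
    qed
  next
    define k where "k = 4*Kv*Pp/mm * (1 + 1/Sig_lo)"
    have lo: "0 < Sig_lo" using Sig_bounds by simp
    show "\<exists>K_l. Lp_P T Pf 2 K_l \<and>
          (\<forall>t S A M Sig. in_D T Sig_lo Sig_hi t (S, A, M, Sig) \<longrightarrow>
             \<bar>lam psi C V bet gam t (S, A, M, Sig)\<bar>
             * frobenius_norm (mat2 (S\<^sup>2 * C_SS C t S Sig) (S * C_SSig C t S Sig)
                                    (S * C_SSig C t S Sig) (C_SigSig C t S Sig))
             \<le> K_l t (S, A, M, Sig))"
    proof (intro exI[of _ "\<lambda>t x. k * (2 + \<bar>K_C t x\<bar>)"] conjI allI impI)
      show "Lp_P T Pf 2 (\<lambda>t x. k * (2 + \<bar>K_C t x\<bar>))"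
        by (rule Lp_affine[OF K_C_L2]) (use models T_pos in auto)
      fix t S A M Sig assume D: "in_D T Sig_lo Sig_hi t (S,A,M,Sig)"
      interpret P: pcl psi "cvec C t (S,A,M,Sig)" "vvec V bet gam t (S,A,M,Sig)" using PC[OF D] .
      let ?c = "cvec C t (S,A,M,Sig)" and ?v = "vvec V bet gam t (S,A,M,Sig)"
      define a where "a = S\<^sup>2 * C_SS C t S Sig"
      define b where "b = S * C_SSig C t S Sig"
      define d where "d = C_SigSig C t S Sig"
      define c1 where "c1 = C_Sig C t S Sig"
      define Kc where "Kc = K_C t (S,A,M,Sig)"
      define s3 where "s3 = \<bar>?c$1\<bar>+\<bar>?c$2\<bar>+\<bar>?c$3\<bar>"
      define s' where "s' = \<bar>c1\<bar> + \<bar>a\<bar> + \<bar>b\<bar>"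
      define l where "l = lam psi C V bet gam t (S,A,M,Sig)"
      from D have Sig: "Sig_lo \<le> Sig" "Sig \<le> Sig_hi" by (auto simp: in_D_def)
      have Sp: "0 < Sig" using Sig lo by linarith
      have cc: "?c$1 = c1" "?c$2 = Sig * a" "?c$3 = Sig * b"
        by (simp_all add: cvec_def a_def b_def c1_def mult.assoc)
      have s'0: "0 \<le> s'" unfolding s'_def by simp
      have fr: "frobenius_norm (mat2 a b b d) \<le> \<bar>a\<bar>+\<bar>b\<bar>+\<bar>b\<bar>+\<bar>d\<bar>" unfolding frob by (rule sqrt4)
      have "\<bar>d\<bar> \<le> Kc * s'" using C_SigSig_bound[OF D] unfolding d_def Kc_def s'_def a_def b_def c1_def .
      also have "... \<le> \<bar>Kc\<bar> * s'" using s'0 by (intro mult_right_mono) auto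
      finally have db: "\<bar>d\<bar> \<le> \<bar>Kc\<bar> * s'" .
      have fr2: "frobenius_norm (mat2 a b b d) \<le> (2 + \<bar>Kc\<bar>) * s'"
      proof -
        have e: "(2 + \<bar>Kc\<bar>) * s' = 2 * s' + \<bar>Kc\<bar> * s'" by (simp add: algebra_simps)
        show ?thesis using fr db e abs_ge_zero[of c1] abs_ge_zero[of a] abs_ge_zero[of b] s'_def by linarith
      qed
      have ab: "\<bar>a\<bar> \<le> \<bar>?c$2\<bar>/Sig_lo" "\<bar>b\<bar> \<le> \<bar>?c$3\<bar>/Sig_lo"
      proof -
        have "Sig_lo * \<bar>a\<bar> \<le> Sig * \<bar>a\<bar>" using Sig by (intro mult_right_mono) auto
        thus "\<bar>a\<bar> \<le> \<bar>?c$2\<bar>/Sig_lo" using lo Sp unfolding cc by (simp add: abs_mult pos_le_divide_eq mult.commute)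
        have "Sig_lo * \<bar>b\<bar> \<le> Sig * \<bar>b\<bar>" using Sig by (intro mult_right_mono) auto
        thus "\<bar>b\<bar> \<le> \<bar>?c$3\<bar>/Sig_lo" using lo Sp unfolding cc by (simp add: abs_mult pos_le_divide_eq mult.commute)
      qed
      have "(\<bar>?c$2\<bar> + \<bar>?c$3\<bar>)/Sig_lo \<le> s3/Sig_lo" unfolding s3_def using lo by (intro divide_right_mono) auto
      moreover have "(1 + 1/Sig_lo) * s3 = s3 + s3/Sig_lo" by (simp add: algebra_simps)
      moreover have "\<bar>?c$2\<bar>/Sig_lo + \<bar>?c$3\<bar>/Sig_lo = (\<bar>?c$2\<bar> + \<bar>?c$3\<bar>)/Sig_lo" by (simp add: add_divide_distrib)
      ultimately have s's3: "s' \<le> (1 + 1/Sig_lo) * s3" using ab unfolding s'_def s3_def cc(1) by linarith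
      have lb: "\<bar>l\<bar> * s3 \<le> 4*Kv*Pp/mm"
        unfolding l_def lam_eq s3_def Pp_def mm_def by (rule P.lam_bound) (rule VB[OF D])
      have "\<bar>l\<bar> * frobenius_norm (mat2 a b b d) \<le> \<bar>l\<bar> * ((2 + \<bar>Kc\<bar>) * s')"
        using fr2 by (intro mult_left_mono) auto
      also have "... \<le> \<bar>l\<bar> * ((2 + \<bar>Kc\<bar>) * ((1 + 1/Sig_lo) * s3))"
        using s's3 by (intro mult_left_mono) auto
      also have "... = (2 + \<bar>Kc\<bar>) * (1 + 1/Sig_lo) * (\<bar>l\<bar> * s3)" by (simp add: algebra_simps)
      also have "... \<le> (2 + \<bar>Kc\<bar>) * (1 + 1/Sig_lo) * (4*Kv*Pp/mm)"
        using lb lo by (intro mult_left_mono) auto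
      also have "... = k * (2 + \<bar>Kc\<bar>)" unfolding k_def using mm0 lo by (simp add: field_simps)
      finally show "\<bar>lam psi C V bet gam t (S, A, M, Sig)\<bar>
             * frobenius_norm (mat2 (S\<^sup>2 * C_SS C t S Sig) (S * C_SSig C t S Sig)
                                    (S * C_SSig C t S Sig) (C_SigSig C t S Sig))
             \<le> k * (2 + \<bar>K_C t (S, A, M, Sig)\<bar>)"
        unfolding l_def a_def b_def d_def Kc_def .
    qed
  qed
qed

end
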